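(* Let $\mathcal G=\prod_{i=1}^n\mathcal G^i:\prod_i[k_i]\to\mathbb{R}^n$ be a grid with controlling constant $c$ and let $\delta<c/2$. Then $\mathsf M^{\mathcal G}_\delta$ is a well-defined endofunctor of the category of finitely presented $n$-parameter persistence modules: the module $\mathsf M^{\mathcal G}_\delta(M)$ does not depend (up to isomorphism) on the chosen presentation of $M$, and the induced morphism $\mathsf M^{\mathcal G}_\delta(f)$ is well defined for every morphism $f$.
   Context: Modules are $\mathbb{R}^n$-graded modules over $P_n$ (monoid ring over a field of $([0,\infty)^n,+)$, monomials $\vec x^{\vec a}$); a finitely presented module has a presentation $F_1\xrightarrow{p_1}F_0\to M\to0$ with $F_0=\mathrm{Free}[\{\vec b_i\}]$, $F_1=\mathrm{Free}[\{\vec r_l\}]$ finitely generated free. A grid is $\mathcal G=\prod_i\mathcal G^i$ with $\mathcal G^i:[k_i]\to\mathbb{R}$; its controlling constant is $c(\mathcal G)=\min\{\|\vec a-\vec b\|_\infty:\vec a\ne\vec b\in\mathrm{Im}\,\mathcal G\}$. For $\delta<c/2$, the merge function $\mathsf M^{\mathcal G}_\delta:\mathbb{R}^n\to\mathbb{R}^n$ acts coordinatewise by $x\mapsto\mathcal G^i(k)$ if $x\in[\mathcal G^i(k)-\delta,\mathcal G^i(k)+\delta]$ for some $k$, and $x\mapsto x$ otherwise; it is order preserving. On free modules, $\mathsf M^{\mathcal G}_\delta(\mathrm{Free}[\mathcal X])=\mathrm{Free}[\mathsf M^{\mathcal G}_\delta(\mathcal X)]$ (same generators, grades replaced by their merges),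 and a morphism $\vec b\mapsto\sum_j c_j\vec x^{\vec b-\vec b'_j}\vec b'_j$ is sent to $\mathsf M(\vec b)\mapsto\sum_jc_j\vec x^{\mathsf M(\vec b)-\mathsf M(\vec b'_j)}\mathsf M(\vec b'_j)$. For $M$ with presentation $F_1\to F_0\to M$, $\mathsf M^{\mathcal G}_\delta(M)=\mathrm{coker}\,\mathsf M^{\mathcal G}_\delta(F_1\to F_0)$. For $f:M\to N$, choose a lift $f_0:F_0\to G_0$ to presentations, and set $\mathsf M^{\mathcal G}_\delta(f)$ to be the morphism of cokernels induced by $\mathsf M^{\mathcal G}_\delta(f_0)$. *)

theory Defs
  imports "HOL-Analysis.Analysis" "HOL-Library.Extended_Real"
begin

text \<open>A grid G = prod_i G^i with G^i : [k_i] -> R is given by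
  G :: 'n => nat => real (G i = G^i) and K :: 'n => nat (K i = k_i), where
  [k_i] is rendered as the index set {..<K i}.\<close>

definition grid_image :: "('n::finite \<Rightarrow> nat \<Rightarrow> real) \<Rightarrow> ('n \<Rightarrow> nat) \<Rightarrow> (real^'n) set" where
  "grid_image G K = {x. \<forall>i. \<exists>k<K i. x$i = G i k}"

text \<open>Controlling constant: min of sup-norm distances between distinct grid points
  (an ereal, equal to infinity if the grid has a single point).\<close>
definition ctrl_const :: "('n::finite \<Rightarrow> nat \<Rightarrow> real) \<Rightarrow> ('n \<Rightarrow> nat) \<Rightarrow> ereal" where
  "ctrl_const G K = Inf {ereal (infnorm (a - b)) | a b.
       a \<in> grid_image G K \<and> b \<in> grid_image G K \<and> a \<noteq> b}"

definition merge_fun :: "('n::finite \<Rightarrow> nat \<Rightarrow> real) \<Rightarrow> ('n \<Rightarrow> nat) \<Rightarrow> real \<Rightarrow> real^'n \<Rightarrow> real^'n" where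
  "merge_fun G K \<delta> x = (\<chi> i.
     if \<exists>k<K i. G i k - \<delta> \<le> x$i \<and> x$i \<le> G i k + \<delta>
     then G i (SOME k. k < K i \<and> G i k - \<delta> \<le> x$i \<and> x$i \<le> G i k + \<delta>)
     else x$i)"

text \<open>A finite presentation F1 --p1--> F0 over the field 'k:
  F0 = Free[b_0..b_{ng-1}] with b_i = gen_gr i,
  F1 = Free[r_0..r_{nr-1}] with r_l = rel_gr l,
  p1(r_l) = sum_i (pmat i l) x^(r_l - b_i) b_i.\<close>
record ('k, 'n) pres =
  ngen :: nat
  gen_gr :: "nat \<Rightarrow> real^'n"
  nrel :: nat
  rel_gr :: "nat \<Rightarrow> real^'n"
  pmat :: "nat \<Rightarrow> nat \<Rightarrow> 'k"

definition valid_pres :: "('k::field, 'n::finite) pres \<Rightarrow> bool" where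
  "valid_pres P \<longleftrightarrow> (\<forall>i l. pmat P i l \<noteq> 0 \<longrightarrow>
       i < ngen P \<and> l < nrel P \<and> gen_gr P i \<le> rel_gr P l)"

text \<open>Degree-a part of F0, identified with coefficient vectors w.r.t. the basis
  x^(a - b_i) b_i (b_i <= a); the structure maps x^v of a free module are then
  the inclusions.\<close>
definition F0 :: "('k::field, 'n::finite) pres \<Rightarrow> real^'n \<Rightarrow> (nat \<Rightarrow> 'k) set" where
  "F0 P a = {c. \<forall>i. c i \<noteq> 0 \<longrightarrow> i < ngen P \<and> gen_gr P i \<le> a}"

text \<open>Degree-a part of the image of p1.\<close>
definition Rel :: "('k::field, 'n::finite) pres \<Rightarrow> real^'n \<Rightarrow> (nat \<Rightarrow> 'k) set" where
  "Rel P a = {(\<lambda>i. \<Sum>l<nrel P. d l * pmat P i l) | d.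
       \<forall>l. d l \<noteq> 0 \<longrightarrow> l < nrel P \<and> rel_gr P l \<le> a}"

definition cos :: "('k::field, 'n::finite) pres \<Rightarrow> real^'n \<Rightarrow> (nat \<Rightarrow> 'k) \<Rightarrow> (nat \<Rightarrow> 'k) set" where
  "cos P a c = {(\<lambda>i. c i + r i) | r. r \<in> Rel P a}"

text \<open>The degree-a part of the cokernel module M = coker p1.\<close>
definition Mod :: "('k::field, 'n::finite) pres \<Rightarrow> real^'n \<Rightarrow> (nat \<Rightarrow> 'k) set set" where
  "Mod P a = cos P a ` F0 P a"

text \<open>Module operations in degree a and the structure map M_a -> M_a' (a <= a'),
  i.e. multiplication by x^(a'-a).\<close>
definition cadd :: "('k::field, 'n::finite) pres \<Rightarrow> real^'n \<Rightarrow> (nat \<Rightarrow> 'k) set \<Rightarrow> (nat \<Rightarrow> 'k) set \<Rightarrow> (nat \<Rightarrow> 'k) set" where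
  "cadd P a X Y = {(\<lambda>i. x i + y i + r i) | x y r. x \<in> X \<and> y \<in> Y \<and> r \<in> Rel P a}"

definition csmult :: "('k::field, 'n::finite) pres \<Rightarrow> real^'n \<Rightarrow> 'k \<Rightarrow> (nat \<Rightarrow> 'k) set \<Rightarrow> (nat \<Rightarrow> 'k) set" where
  "csmult P a s X = {(\<lambda>i. s * x i + r i) | x r. x \<in> X \<and> r \<in> Rel P a}"

definition cstr :: "('k::field, 'n::finite) pres \<Rightarrow> real^'n \<Rightarrow> (nat \<Rightarrow> 'k) set \<Rightarrow> (nat \<Rightarrow> 'k) set" where
  "cstr P a' X = {(\<lambda>i. x i + r i) | x r. x \<in> X \<and> r \<in> Rel P a'}"

definition pmor :: "('k::field, 'n::finite) pres \<Rightarrow> ('k, 'n) pres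
     \<Rightarrow> (real^'n \<Rightarrow> (nat \<Rightarrow> 'k) set \<Rightarrow> (nat \<Rightarrow> 'k) set) \<Rightarrow> bool" where
  "pmor P Q f \<longleftrightarrow>
     (\<forall>a. \<forall>X\<in>Mod P a. f a X \<in> Mod Q a) \<and>
     (\<forall>a. \<forall>X\<in>Mod P a. \<forall>Y\<in>Mod P a. f a (cadd P a X Y) = cadd Q a (f a X) (f a Y)) \<and>
     (\<forall>a s. \<forall>X\<in>Mod P a. f a (csmult P a s X) = csmult Q a s (f a X)) \<and>
     (\<forall>a a'. a \<le> a' \<longrightarrow> (\<forall>X\<in>Mod P a. f a' (cstr P a' X) = cstr Q a' (f a X)))"

definition mor_eq :: "('k::field, 'n::finite) pres
     \<Rightarrow> (real^'n \<Rightarrow> (nat \<Rightarrow> 'k) set \<Rightarrow> (nat \<Rightarrow> 'k) set)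
     \<Rightarrow> (real^'n \<Rightarrow> (nat \<Rightarrow> 'k) set \<Rightarrow> (nat \<Rightarrow> 'k) set) \<Rightarrow> bool" where
  "mor_eq P f g \<longleftrightarrow> (\<forall>a. \<forall>X\<in>Mod P a. f a X = g a X)"

definition mod_iso :: "('k::field, 'n::finite) pres \<Rightarrow> ('k, 'n) pres \<Rightarrow> bool" where
  "mod_iso P Q \<longleftrightarrow> (\<exists>f g. pmor P Q f \<and> pmor Q P g \<and>
      mor_eq P (\<lambda>a X. g a (f a X)) (\<lambda>a X. X) \<and> mor_eq Q (\<lambda>a X. f a (g a X)) (\<lambda>a X. X))"

text \<open>A morphism F0(P) -> F0(Q) of free modules: b_i |-> sum_j (A j i) x^(b_i - b'_j) b'_j.
  On coefficient vectors in any degree it acts as the matrix A.\<close>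
definition valid_fmap :: "('k::field, 'n::finite) pres \<Rightarrow> ('k, 'n) pres \<Rightarrow> (nat \<Rightarrow> nat \<Rightarrow> 'k) \<Rightarrow> bool" where
  "valid_fmap P Q A \<longleftrightarrow> (\<forall>j i. A j i \<noteq> 0 \<longrightarrow> j < ngen Q \<and> i < ngen P \<and> gen_gr Q j \<le> gen_gr P i)"

definition fapply :: "('k::field, 'n::finite) pres \<Rightarrow> (nat \<Rightarrow> nat \<Rightarrow> 'k) \<Rightarrow> (nat \<Rightarrow> 'k) \<Rightarrow> (nat \<Rightarrow> 'k)" where
  "fapply P A c = (\<lambda>j. \<Sum>i<ngen P. A j i * c i)"

definition is_lift :: "('k::field, 'n::finite) pres \<Rightarrow> ('k, 'n) pres
     \<Rightarrow> (real^'n \<Rightarrow> (nat \<Rightarrow> 'k) set \<Rightarrow> (nat \<Rightarrow> 'k) set) \<Rightarrow> (nat \<Rightarrow> nat \<Rightarrow> 'k) \<Rightarrow> bool" where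
  "is_lift P Q f A \<longleftrightarrow> valid_fmap P Q A \<and>
     (\<forall>a. \<forall>c\<in>F0 P a. f a (cos P a c) = cos Q a (fapply P A c))"

definition induced_by :: "('k::field, 'n::finite) pres \<Rightarrow> ('k, 'n) pres
     \<Rightarrow> (nat \<Rightarrow> nat \<Rightarrow> 'k) \<Rightarrow> (real^'n \<Rightarrow> (nat \<Rightarrow> 'k) set \<Rightarrow> (nat \<Rightarrow> 'k) set) \<Rightarrow> bool" where
  "induced_by P Q A g \<longleftrightarrow> pmor P Q g \<and>
     (\<forall>a. \<forall>c\<in>F0 P a. g a (cos P a c) = cos Q a (fapply P A c))"

text \<open>M_delta(F1 -> F0): same generators and coefficients, grades replaced by their
  merges; the matrix of a free-module map is unchanged.\<close>
definition merge_pres :: "('n::finite \<Rightarrow> nat \<Rightarrow> real) \<Rightarrow> ('n \<Rightarrow> nat) \<Rightarrow> real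
     \<Rightarrow> ('k, 'n) pres \<Rightarrow> ('k, 'n) pres" where
  "merge_pres G K \<delta> P = P\<lparr>gen_gr := merge_fun G K \<delta> \<circ> gen_gr P,
                          rel_gr := merge_fun G K \<delta> \<circ> rel_gr P\<rparr>"

end

theory Submission
  imports Defs
begin


lemma grid_pt:
  fixes G :: "'n::finite \<Rightarrow> nat \<Rightarrow> real"
  assumes grid: "\<forall>i. 1 \<le> K i" and k: "k < K i"
  shows "(\<chi> j. if j = i then G i k else G j 0) \<in> grid_image G K"
  unfolding grid_image_def
proof (intro CollectI allI)
  fix j
  show "\<exists>k'<K j. (\<chi> j. if j = i then G i k else G j 0) $ j = G j k'"
  proof (cases "j = i")
    case True then show ?thesis using k by auto
  next
    case False
    have "0 < K j" using grid by (metis One_nat_def Suc_le_eq)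
    then show ?thesis using False by auto
  qed
qed

lemma grid_sep:
  fixes G :: "'n::finite \<Rightarrow> nat \<Rightarrow> real"
  assumes grid: "\<forall>i. 1 \<le> K i" and delta: "ereal \<delta> < ctrl_const G K / 2"
    and k: "k < K i" and k': "k' < K i" and ne: "G i k \<noteq> G i k'"
  shows "2*\<delta> < \<bar>G i k - G i k'\<bar>"
proof -
  define a :: "real^'n" where "a = (\<chi> j. if j = i then G i k else G j 0)"
  define b :: "real^'n" where "b = (\<chi> j. if j = i then G i k' else G j 0)"
  have ga: "a \<in> grid_image G K" unfolding a_def by (rule grid_pt[OF grid k])
  have gb: "b \<in> grid_image G K" unfolding b_def by (rule grid_pt[OF grid k'])
  have ab: "a \<noteq> b"
  proof
    assume "a = b"
    then have "a $ i = b $ i" by simp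
    then show False using ne unfolding a_def b_def by simp
  qed
  have comp: "(a - b) $ j = (if j = i then G i k - G i k' else 0)" for j
    unfolding a_def b_def by simp
  have inf: "infnorm (a - b) \<le> \<bar>G i k - G i k'\<bar>"
    unfolding infnorm_cart
  proof (rule cSup_least)
    show "{\<bar>(a - b) $ j\<bar> |j. j \<in> UNIV} \<noteq> {}" by blast
  next
    fix x assume "x \<in> {\<bar>(a - b) $ j\<bar> |j. j \<in> UNIV}"
    then obtain j where "x = \<bar>(a - b) $ j\<bar>" by blast
    then show "x \<le> \<bar>G i k - G i k'\<bar>" unfolding comp by simp
  qed
  have mem: "ereal (infnorm (a - b)) \<in> {ereal (infnorm (a - b)) | a b.
       a \<in> grid_image G K \<and> b \<in> grid_image G K \<and> a \<noteq> b}"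
    using ga gb ab by blast
  have "ctrl_const G K \<le> ereal (infnorm (a - b))"
    unfolding ctrl_const_def by (rule Inf_lower[OF mem])
  also have "\<dots> \<le> ereal \<bar>G i k - G i k'\<bar>" using inf by simp
  finally have c: "ctrl_const G K \<le> ereal \<bar>G i k - G i k'\<bar>" .
  have "ctrl_const G K / 2 \<le> ereal (\<bar>G i k - G i k'\<bar> / 2)"
  proof (cases "ctrl_const G K")
    case (real r)
    then show ?thesis using c by simp
  next
    case PInf then show ?thesis using c by simp
  next
    case MInf then show ?thesis by simp
  qed
  with delta have "ereal \<delta> < ereal (\<bar>G i k - G i k'\<bar> / 2)" by (rule less_le_trans)
  then show ?thesis by simp
qed


lemma merge_mono:
  fixes G :: "'n::finite \<Rightarrow> nat \<Rightarrow> real"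
  assumes sep: "\<And>i k k'. k < K i \<Longrightarrow> k' < K i \<Longrightarrow> G i k \<noteq> G i k' \<Longrightarrow> 2*\<delta> < \<bar>G i k - G i k'\<bar>"
  shows "mono (merge_fun G K \<delta>)"
proof (rule monoI)
  fix x y :: "real^'n" assume xy: "x \<le> y"
  show "merge_fun G K \<delta> x \<le> merge_fun G K \<delta> y"
    unfolding less_eq_vec_def
  proof
    fix i
    have le: "x$i \<le> y$i" using xy by (simp add: less_eq_vec_def)
    define P where "P = (\<lambda>z k. k < K i \<and> G i k - \<delta> \<le> z \<and> z \<le> G i k + \<delta>)"
    have m: "merge_fun G K \<delta> z $ i = (if \<exists>k. P (z$i) k then G i (SOME k. P (z$i) k) else z$i)" for z
      unfolding merge_fun_def P_def by simp
    show "merge_fun G K \<delta> x $ i \<le> merge_fun G K \<delta> y $ i"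
    proof (cases "\<exists>k. P (x$i) k")
      case Tx: True
      define kx where "kx = (SOME k. P (x$i) k)"
      have kx: "P (x$i) kx" using Tx someI_ex unfolding kx_def by metis
      show ?thesis
      proof (cases "\<exists>k. P (y$i) k")
        case Ty: True
        define ky where "ky = (SOME k. P (y$i) k)"
        have ky: "P (y$i) ky" using Ty someI_ex unfolding ky_def by metis
        have "G i kx \<le> G i ky"
        proof (rule ccontr)
          assume "\<not> ?thesis"
          then have "G i kx \<noteq> G i ky" "G i ky < G i kx" by auto
          with sep[of kx i ky] kx ky le show False unfolding P_def by auto
        qed
        then show ?thesis using m[of x] m[of y] Tx Ty kx_def ky_def by simp
      next
        case Fy: False
        have "G i kx \<le> y$i" using kx le Fy unfolding P_def by force
        then show ?thesis using m[of x] m[of y] Tx Fy kx_def by simp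
      qed
    next
      case Fx: False
      show ?thesis
      proof (cases "\<exists>k. P (y$i) k")
        case Ty: True
        define ky where "ky = (SOME k. P (y$i) k)"
        have ky: "P (y$i) ky" using Ty someI_ex unfolding ky_def by metis
        have "x$i \<le> G i ky" using ky le Fx unfolding P_def by force
        then show ?thesis using m[of x] m[of y] Fx Ty ky_def by simp
      next
        case Fy: False
        then show ?thesis using m[of x] m[of y] Fx le by simp
      qed
    qed
  qed
qed



definition uv :: "nat \<Rightarrow> nat \<Rightarrow> 'k::field" where "uv i = (\<lambda>j. if j = i then 1 else 0)"

definition mpres :: "(real^'n \<Rightarrow> real^'n) \<Rightarrow> ('k,'n::finite) pres \<Rightarrow> ('k,'n) pres" where
 "mpres m P = P\<lparr>gen_gr := m \<circ> gen_gr P, rel_gr := m \<circ> rel_gr P\<rparr>"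

lemma merge_pres_eq: "merge_pres G K \<delta> = mpres (merge_fun G K \<delta>)"
  by (rule ext) (simp add: merge_pres_def mpres_def)

lemma mpres_simps[simp]: "ngen (mpres m P) = ngen P" "nrel (mpres m P) = nrel P"
  "pmat (mpres m P) = pmat P" "gen_gr (mpres m P) = m \<circ> gen_gr P" "rel_gr (mpres m P) = m \<circ> rel_gr P"
  by (simp_all add: mpres_def)

lemma fapply_mpres[simp]: "fapply (mpres m P) = fapply P"
  by (simp add: fapply_def fun_eq_iff)

lemma Rel_zero: "(\<lambda>i. 0) \<in> Rel S a"
  unfolding Rel_def by (rule CollectI, rule exI[of _ "\<lambda>l. 0"]) simp

lemma Rel_add: assumes "x \<in> Rel S a" "y \<in> Rel S a" shows "(\<lambda>i. x i + y i) \<in> Rel S a"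
proof -
  from assms obtain d1 d2 where x: "x = (\<lambda>i. \<Sum>l<nrel S. d1 l * pmat S i l)"
    and d1: "\<forall>l. d1 l \<noteq> 0 \<longrightarrow> l < nrel S \<and> rel_gr S l \<le> a"
    and y: "y = (\<lambda>i. \<Sum>l<nrel S. d2 l * pmat S i l)"
    and d2: "\<forall>l. d2 l \<noteq> 0 \<longrightarrow> l < nrel S \<and> rel_gr S l \<le> a"
    unfolding Rel_def by blast
  have "\<forall>l. d1 l + d2 l \<noteq> 0 \<longrightarrow> l < nrel S \<and> rel_gr S l \<le> a"
    using d1 d2 by (metis add.right_neutral add_0)
  then show ?thesis unfolding Rel_def
    by (intro CollectI exI[of _ "\<lambda>l. d1 l + d2 l"]) (auto simp: x y distrib_right sum.distrib)
qed

lemma Rel_smult: assumes "x \<in> Rel S a" shows "(\<lambda>i. s * x i) \<in> Rel S a"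
proof -
  from assms obtain d where x: "x = (\<lambda>i. \<Sum>l<nrel S. d l * pmat S i l)"
    and d: "\<forall>l. d l \<noteq> 0 \<longrightarrow> l < nrel S \<and> rel_gr S l \<le> a"
    unfolding Rel_def by blast
  have "\<forall>l. s * d l \<noteq> 0 \<longrightarrow> l < nrel S \<and> rel_gr S l \<le> a" using d by auto
  then show ?thesis unfolding Rel_def
    by (intro CollectI exI[of _ "\<lambda>l. s * d l"]) (auto simp: x sum_distrib_left mult.assoc)
qed

lemma Rel_diff: assumes "x \<in> Rel S a" "y \<in> Rel S a" shows "(\<lambda>i. x i - y i) \<in> Rel S a"
  using Rel_add[OF assms(1) Rel_smult[OF assms(2), of "-1"]] by simp

lemma Rel_sum: "finite T \<Longrightarrow> (\<And>t. t \<in> T \<Longrightarrow> v t \<in> Rel S a) \<Longrightarrow> (\<lambda>i. \<Sum>t\<in>T. v t i) \<in> Rel S a"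
proof (induction T rule: finite_induct)
  case empty then show ?case using Rel_zero by simp
next
  case (insert t T)
  have "(\<lambda>i. v t i + (\<Sum>t\<in>T. v t i)) \<in> Rel S a"
    by (rule Rel_add[of "v t" S a "\<lambda>i. \<Sum>t\<in>T. v t i"]) (use insert in auto)
  then show ?case using insert by simp
qed

lemma Rel_mono: "a \<le> a' \<Longrightarrow> x \<in> Rel S a \<Longrightarrow> x \<in> Rel S a'"
  unfolding Rel_def using order_trans by blast

lemma Rel_mpres: "mono m \<Longrightarrow> x \<in> Rel Q b \<Longrightarrow> x \<in> Rel (mpres m Q) (m b)"
  unfolding Rel_def by (auto simp: mono_def)

lemma cos_self: "x \<in> cos S a x"
  unfolding cos_def using Rel_zero by force

lemma cos_eq_iff: "cos S a x = cos S a y \<longleftrightarrow> (\<lambda>i. x i - y i) \<in> Rel S a"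
proof
  assume "cos S a x = cos S a y"
  then have "x \<in> cos S a y" using cos_self by metis
  then obtain r where "x = (\<lambda>i. y i + r i)" "r \<in> Rel S a" unfolding cos_def by blast
  then show "(\<lambda>i. x i - y i) \<in> Rel S a" by simp
next
  assume d: "(\<lambda>i. x i - y i) \<in> Rel S a"
  show "cos S a x = cos S a y"
  proof (intro set_eqI iffI)
    fix z assume "z \<in> cos S a x"
    then obtain r where z: "z = (\<lambda>i. x i + r i)" "r \<in> Rel S a" unfolding cos_def by blast
    have "(\<lambda>i. (x i - y i) + r i) \<in> Rel S a" by (rule Rel_add[OF d z(2)])
    then show "z \<in> cos S a y" unfolding cos_def z(1)
      by (intro CollectI exI[of _ "\<lambda>i. (x i - y i) + r i"]) auto
  next
    fix z assume "z \<in> cos S a y"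
    then obtain r where z: "z = (\<lambda>i. y i + r i)" "r \<in> Rel S a" unfolding cos_def by blast
    have "(\<lambda>i. r i - (x i - y i)) \<in> Rel S a" by (rule Rel_diff[OF z(2) d])
    then show "z \<in> cos S a x" unfolding cos_def z(1)
      by (intro CollectI exI[of _ "\<lambda>i. r i - (x i - y i)"]) auto
  qed
qed

lemma cadd_cos: "cadd S a (cos S a x) (cos S a y) = cos S a (\<lambda>i. x i + y i)"
proof (intro set_eqI iffI)
  fix z assume "z \<in> cadd S a (cos S a x) (cos S a y)"
  then obtain x' y' r where z: "z = (\<lambda>i. x' i + y' i + r i)" "x' \<in> cos S a x" "y' \<in> cos S a y" "r \<in> Rel S a"
    unfolding cadd_def by blast
  obtain r1 where r1: "x' = (\<lambda>i. x i + r1 i)" "r1 \<in> Rel S a" using z(2) unfolding cos_def by blast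
  obtain r2 where r2: "y' = (\<lambda>i. y i + r2 i)" "r2 \<in> Rel S a" using z(3) unfolding cos_def by blast
  have "(\<lambda>i. r1 i + r2 i + r i) \<in> Rel S a" by (intro Rel_add r1 r2 z)
  then show "z \<in> cos S a (\<lambda>i. x i + y i)" unfolding cos_def z(1) r1 r2
    by (intro CollectI exI[of _ "\<lambda>i. r1 i + r2 i + r i"]) (auto simp: algebra_simps)
next
  fix z assume "z \<in> cos S a (\<lambda>i. x i + y i)"
  then obtain r where z: "z = (\<lambda>i. x i + y i + r i)" "r \<in> Rel S a" unfolding cos_def by blast
  show "z \<in> cadd S a (cos S a x) (cos S a y)" unfolding cadd_def
    by (intro CollectI exI[of _ x] exI[of _ y] exI[of _ r] conjI) (simp_all add: z cos_self)
qed

lemma csmult_cos: "csmult S a s (cos S a x) = cos S a (\<lambda>i. s * x i)"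
proof (intro set_eqI iffI)
  fix z assume "z \<in> csmult S a s (cos S a x)"
  then obtain x' r where z: "z = (\<lambda>i. s * x' i + r i)" "x' \<in> cos S a x" "r \<in> Rel S a"
    unfolding csmult_def by blast
  obtain r1 where r1: "x' = (\<lambda>i. x i + r1 i)" "r1 \<in> Rel S a" using z(2) unfolding cos_def by blast
  have "(\<lambda>i. s * r1 i + r i) \<in> Rel S a" by (intro Rel_add Rel_smult r1 z)
  then show "z \<in> cos S a (\<lambda>i. s * x i)" unfolding cos_def z(1) r1
    by (intro CollectI exI[of _ "\<lambda>i. s * r1 i + r i"]) (auto simp: algebra_simps)
next
  fix z assume "z \<in> cos S a (\<lambda>i. s * x i)"
  then obtain r where z: "z = (\<lambda>i. s * x i + r i)" "r \<in> Rel S a" unfolding cos_def by blast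
  show "z \<in> csmult S a s (cos S a x)" unfolding csmult_def
    by (intro CollectI exI[of _ x] exI[of _ r] conjI) (simp_all add: z cos_self)
qed

lemma cstr_cos: assumes "a \<le> a'" shows "cstr S a' (cos S a x) = cos S a' x"
proof (intro set_eqI iffI)
  fix z assume "z \<in> cstr S a' (cos S a x)"
  then obtain x' r where z: "z = (\<lambda>i. x' i + r i)" "x' \<in> cos S a x" "r \<in> Rel S a'"
    unfolding cstr_def by blast
  obtain r1 where r1: "x' = (\<lambda>i. x i + r1 i)" "r1 \<in> Rel S a" using z(2) unfolding cos_def by blast
  have "(\<lambda>i. r1 i + r i) \<in> Rel S a'" by (intro Rel_add z Rel_mono[OF assms] r1)
  then show "z \<in> cos S a' x" unfolding cos_def z(1) r1
    by (intro CollectI exI[of _ "\<lambda>i. r1 i + r i"]) (auto simp: algebra_simps)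
next
  fix z assume "z \<in> cos S a' x"
  then obtain r where z: "z = (\<lambda>i. x i + r i)" "r \<in> Rel S a'" unfolding cos_def by blast
  show "z \<in> cstr S a' (cos S a x)" unfolding cstr_def
    by (intro CollectI exI[of _ x] exI[of _ r] conjI) (simp_all add: z cos_self)
qed

lemma Mod_iff: "X \<in> Mod S a \<longleftrightarrow> (\<exists>c\<in>F0 S a. X = cos S a c)"
  unfolding Mod_def by blast

lemma cos_Mod: "c \<in> F0 S a \<Longrightarrow> cos S a c \<in> Mod S a"
  unfolding Mod_def by blast

lemma F0_zero: "(\<lambda>i. 0) \<in> F0 S a" unfolding F0_def by simp
lemma F0_add: assumes "x \<in> F0 S a" "y \<in> F0 S a" shows "(\<lambda>i. x i + y i) \<in> F0 S a"
proof -
  { fix i assume "x i + y i \<noteq> 0"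
    then have "x i \<noteq> 0 \<or> y i \<noteq> 0" by auto
    then have "i < ngen S \<and> gen_gr S i \<le> a" using assms unfolding F0_def by blast }
  then show ?thesis unfolding F0_def by blast
qed
lemma F0_smult: "x \<in> F0 S a \<Longrightarrow> (\<lambda>i. s * x i) \<in> F0 S a"
  unfolding F0_def by auto
lemma F0_mono: "a \<le> a' \<Longrightarrow> x \<in> F0 S a \<Longrightarrow> x \<in> F0 S a'"
  unfolding F0_def using order_trans by blast
lemma F0_supp: "x \<in> F0 S a \<Longrightarrow> x i \<noteq> 0 \<Longrightarrow> i < ngen S"
  unfolding F0_def by blast
lemma uv_F0: "i < ngen S \<Longrightarrow> uv i \<in> F0 S (gen_gr S i)"
  unfolding F0_def uv_def by auto

lemma fapply_uv: "i < ngen P \<Longrightarrow> fapply P A (uv i) = (\<lambda>j. A j i)"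
  unfolding fapply_def uv_def by (simp add: fun_eq_iff if_distrib cong: if_cong)

lemma fapply_zero: "fapply P A (\<lambda>i. 0) = (\<lambda>j. 0)"
  unfolding fapply_def by simp
lemma fapply_add: "fapply P A (\<lambda>i. x i + y i) = (\<lambda>j. fapply P A x j + fapply P A y j)"
  unfolding fapply_def by (simp add: distrib_left sum.distrib)
lemma fapply_smult: "fapply P A (\<lambda>i. s * x i) = (\<lambda>j. s * fapply P A x j)"
  unfolding fapply_def by (simp add: sum_distrib_left mult.left_commute)
lemma fapply_diff: "fapply P A (\<lambda>i. x i - y i) = (\<lambda>j. fapply P A x j - fapply P A y j)"
  unfolding fapply_def by (simp add: right_diff_distrib sum_subtractf)

lemma fapply_rep: "fapply P A x = (\<lambda>j. \<Sum>i<ngen P. x i * fapply P A (uv i) j)"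
proof (rule ext)
  fix j show "fapply P A x j = (\<Sum>i<ngen P. x i * fapply P A (uv i) j)"
    unfolding fapply_def[of P A x] by (rule sum.cong) (simp_all add: fapply_uv mult.commute)
qed

lemma fapply_comp_rep: "fapply Q B (fapply P A x) = (\<lambda>j. \<Sum>i<ngen P. x i * fapply Q B (fapply P A (uv i)) j)"
proof -
  have "fapply Q B (fapply P A x) j = (\<Sum>i<ngen P. x i * fapply Q B (fapply P A (uv i)) j)" for j
  proof -
    have "fapply Q B (fapply P A x) j = (\<Sum>k<ngen Q. \<Sum>i<ngen P. B j k * (A k i * x i))"
      by (simp add: fapply_def sum_distrib_left)
    also have "\<dots> = (\<Sum>i<ngen P. \<Sum>k<ngen Q. x i * (B j k * A k i))"
      by (subst sum.swap) (simp add: mult.commute mult.left_commute)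
    also have "\<dots> = (\<Sum>i<ngen P. x i * fapply Q B (fapply P A (uv i)) j)"
      by (intro sum.cong refl) (simp add: fapply_uv, simp add: fapply_def sum_distrib_left)
    finally show ?thesis .
  qed
  then show ?thesis by auto
qed

lemma id_rep: "(\<forall>i. x i \<noteq> 0 \<longrightarrow> i < n) \<Longrightarrow> x = (\<lambda>j. \<Sum>i<n. x i * uv i j)"
  unfolding uv_def by (auto simp: fun_eq_iff if_distrib cong: if_cong)

lemma fapply_F0: assumes m: "mono m" and A: "valid_fmap P Q A" and c: "c \<in> F0 (mpres m P) a"
  shows "fapply P A c \<in> F0 (mpres m Q) a"
  unfolding F0_def
proof (intro CollectI allI impI)
  fix j assume "fapply P A c j \<noteq> 0"
  then have "\<exists>i\<in>{..<ngen P}. A j i * c i \<noteq> 0" unfolding fapply_def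
    by (meson sum.neutral)
  then obtain i where i: "i < ngen P" "A j i * c i \<noteq> 0" by blast
  then have "A j i \<noteq> 0" "c i \<noteq> 0" by auto
  then have "j < ngen Q" "gen_gr Q j \<le> gen_gr P i" "m (gen_gr P i) \<le> a"
    using A c unfolding valid_fmap_def F0_def by auto
  then show "j < ngen (mpres m Q) \<and> gen_gr (mpres m Q) j \<le> a"
    using m by (auto simp: mono_def intro: order_trans)
qed

lemma F0_mpres_id: "F0 (mpres id P) = F0 P"
  unfolding F0_def by (simp add: fun_eq_iff)

lemma uv_mult: "uv l l' * p = (if l' = l then p else 0)" by (simp add: uv_def)

definition colv :: "('k::field,'n::finite) pres \<Rightarrow> nat \<Rightarrow> nat \<Rightarrow> 'k" where
  "colv P l = (\<lambda>i. pmat P i l)"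

lemma colv_Rel: fixes P :: "('k::field,'n::finite) pres" assumes "l < nrel P" shows "colv P l \<in> Rel P (rel_gr P l)"
proof -
  have "colv P l = (\<lambda>i. \<Sum>l'<nrel P. uv l l' * pmat P i l')"
    using assms unfolding colv_def by (simp add: fun_eq_iff uv_mult)
  moreover have "\<forall>l'. uv l l' \<noteq> (0::'k) \<longrightarrow> l' < nrel P \<and> rel_gr P l' \<le> rel_gr P l"
    using assms unfolding uv_def by auto
  ultimately show ?thesis unfolding Rel_def by blast
qed

lemma colv_F0: "valid_pres P \<Longrightarrow> colv P l \<in> F0 P (rel_gr P l)"
  unfolding valid_pres_def F0_def colv_def by blast

lemma fapply_F0': assumes A: "valid_fmap P Q A" and c: "c \<in> F0 P a"
  shows "fapply P A c \<in> F0 Q a"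
  using fapply_F0[of id P Q A c a] A c by (simp add: F0_mpres_id mono_def)

lemma lift_colrel: assumes P: "valid_pres P" and L: "is_lift P Q f A" and l: "l < nrel P"
  shows "fapply P A (colv P l) \<in> Rel Q (rel_gr P l)"
proof -
  let ?r = "rel_gr P l"
  have e: "cos P ?r (colv P l) = cos P ?r (\<lambda>i. 0)"
    unfolding cos_eq_iff using colv_Rel[OF l] by simp
  have "cos Q ?r (fapply P A (colv P l)) = f ?r (cos P ?r (colv P l))"
    using L colv_F0[OF P] unfolding is_lift_def by simp
  also have "\<dots> = f ?r (cos P ?r (\<lambda>i. 0))" using e by simp
  also have "\<dots> = cos Q ?r (\<lambda>i. 0)"
    using L F0_zero[of P ?r] unfolding is_lift_def by (simp add: fapply_zero)
  finally show ?thesis unfolding cos_eq_iff by simp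
qed

lemma fapply_Rel: assumes m: "mono m"
  and cr: "\<forall>l<nrel P. fapply P A (colv P l) \<in> Rel Q (rel_gr P l)"
  and x: "x \<in> Rel (mpres m P) a"
  shows "fapply P A x \<in> Rel (mpres m Q) a"
proof -
  obtain d where xd: "x = (\<lambda>i. \<Sum>l<nrel P. d l * pmat P i l)"
    and d: "\<forall>l. d l \<noteq> 0 \<longrightarrow> l < nrel P \<and> m (rel_gr P l) \<le> a"
    using x unfolding Rel_def by auto
  have eq: "fapply P A x = (\<lambda>j. \<Sum>l<nrel P. d l * fapply P A (colv P l) j)"
  proof
    fix j
    have "fapply P A x j = (\<Sum>i<ngen P. \<Sum>l<nrel P. A j i * (d l * pmat P i l))"
      by (simp add: xd fapply_def sum_distrib_left)
    also have "\<dots> = (\<Sum>l<nrel P. \<Sum>i<ngen P. d l * (A j i * pmat P i l))"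
      by (subst sum.swap) (simp add: mult.left_commute)
    also have "\<dots> = (\<Sum>l<nrel P. d l * fapply P A (colv P l) j)"
      by (simp add: fapply_def colv_def sum_distrib_left)
    finally show "fapply P A x j = (\<Sum>l<nrel P. d l * fapply P A (colv P l) j)" .
  qed
  have "(\<lambda>j. \<Sum>l<nrel P. d l * fapply P A (colv P l) j) \<in> Rel (mpres m Q) a"
  proof (rule Rel_sum)
    fix l assume l: "l \<in> {..<nrel P}"
    show "(\<lambda>j. d l * fapply P A (colv P l) j) \<in> Rel (mpres m Q) a"
    proof (cases "d l = 0")
      case True then show ?thesis using Rel_zero by simp
    next
      case False
      then have le: "m (rel_gr P l) \<le> a" using d by auto
      have r: "fapply P A (colv P l) \<in> Rel (mpres m Q) (m (rel_gr P l))"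
        using Rel_mpres[OF m] cr l by auto
      show ?thesis by (rule Rel_smult[OF Rel_mono[OF le r]])
    qed
  qed simp
  then show ?thesis using eq by simp
qed

lemma gen_key: assumes m: "mono m"
  and D: "\<And>x. (\<forall>i. x i \<noteq> 0 \<longrightarrow> i < ngen P) \<Longrightarrow> D x = (\<lambda>j. \<Sum>i<ngen P. x i * D (uv i) j)"
  and g: "\<And>i. i < ngen P \<Longrightarrow> D (uv i) \<in> Rel Q (gen_gr P i)"
  and c: "c \<in> F0 (mpres m P) a"
  shows "D c \<in> Rel (mpres m Q) a"
proof -
  have "D c = (\<lambda>j. \<Sum>i<ngen P. c i * D (uv i) j)"
    using c unfolding F0_def by (intro D) auto
  moreover have "(\<lambda>j. \<Sum>i<ngen P. c i * D (uv i) j) \<in> Rel (mpres m Q) a"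
  proof (rule Rel_sum)
    fix i assume i: "i \<in> {..<ngen P}"
    show "(\<lambda>j. c i * D (uv i) j) \<in> Rel (mpres m Q) a"
    proof (cases "c i = 0")
      case True then show ?thesis using Rel_zero by simp
    next
      case False
      then have le: "m (gen_gr P i) \<le> a" using c unfolding F0_def by auto
      have r: "D (uv i) \<in> Rel (mpres m Q) (m (gen_gr P i))"
        using Rel_mpres[OF m] g i by auto
      show ?thesis by (rule Rel_smult[OF Rel_mono[OF le r]])
    qed
  qed simp
  ultimately show ?thesis by simp
qed

lemma agree: fixes P :: "('k::field,'n::finite) pres" assumes m: "mono m"
  and D1: "\<And>x. (\<forall>i. x i \<noteq> 0 \<longrightarrow> i < ngen P) \<Longrightarrow> D1 x = (\<lambda>j. \<Sum>i<ngen P. x i * D1 (uv i) j)"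
  and D2: "\<And>x. (\<forall>i. x i \<noteq> 0 \<longrightarrow> i < ngen P) \<Longrightarrow> D2 x = (\<lambda>j. \<Sum>i<ngen P. x i * D2 (uv i) j)"
  and g: "\<And>i. i < ngen P \<Longrightarrow> cos Q (gen_gr P i) (D1 (uv i)) = cos Q (gen_gr P i) (D2 (uv i))"
  and c: "c \<in> F0 (mpres m P) a"
  shows "cos (mpres m Q) a (D1 c) = cos (mpres m Q) a (D2 c)"
proof -
  let ?D = "\<lambda>x j. D1 x j - D2 x j"
  have "?D c \<in> Rel (mpres m Q) a"
  proof (rule gen_key[OF m _ _ c])
    fix x :: "nat \<Rightarrow> 'k" assume x: "\<forall>i. x i \<noteq> 0 \<longrightarrow> i < ngen P"
    show "?D x = (\<lambda>j. \<Sum>i<ngen P. x i * ?D (uv i) j)"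
      by (subst D1[OF x], subst D2[OF x]) (simp add: right_diff_distrib sum_subtractf)
  next
    fix i assume "i < ngen P"
    then show "?D (uv i) \<in> Rel Q (gen_gr P i)" using g cos_eq_iff by blast
  qed
  then show ?thesis by (simp add: cos_eq_iff)
qed

lemma induced_exists: assumes m: "mono m" and A: "valid_fmap P Q A"
  and cr: "\<forall>l<nrel P. fapply P A (colv P l) \<in> Rel Q (rel_gr P l)"
  shows "\<exists>g. induced_by (mpres m P) (mpres m Q) A g"
proof -
  define g where "g a X = cos (mpres m Q) a (fapply P A (SOME c. c \<in> F0 (mpres m P) a \<and> X = cos (mpres m P) a c))" for a X
  have gc: "g a (cos (mpres m P) a c) = cos (mpres m Q) a (fapply P A c)" if c: "c \<in> F0 (mpres m P) a" for a c
  proof -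
    define c' where "c' = (SOME c'. c' \<in> F0 (mpres m P) a \<and> cos (mpres m P) a c = cos (mpres m P) a c')"
    have c': "c' \<in> F0 (mpres m P) a \<and> cos (mpres m P) a c = cos (mpres m P) a c'"
      unfolding c'_def by (rule someI[of _ c]) (use c in simp)
    then have "(\<lambda>i. c i - c' i) \<in> Rel (mpres m P) a" using cos_eq_iff by blast
    then have "fapply P A (\<lambda>i. c i - c' i) \<in> Rel (mpres m Q) a" by (rule fapply_Rel[OF m cr])
    then have "cos (mpres m Q) a (fapply P A c) = cos (mpres m Q) a (fapply P A c')"
      by (simp add: fapply_diff cos_eq_iff)
    then show ?thesis unfolding g_def c'_def by simp
  qed
  have FA: "c \<in> F0 (mpres m P) a \<Longrightarrow> fapply P A c \<in> F0 (mpres m Q) a" for c a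
    by (rule fapply_F0[OF m A])
  have "pmor (mpres m P) (mpres m Q) g"
    unfolding pmor_def
  proof (intro conjI allI ballI impI)
    fix a X assume "X \<in> Mod (mpres m P) a"
    then obtain c where c: "c \<in> F0 (mpres m P) a" "X = cos (mpres m P) a c" using Mod_iff by blast
    show "g a X \<in> Mod (mpres m Q) a" using c gc FA cos_Mod by metis
  next
    fix a X Y assume "X \<in> Mod (mpres m P) a" "Y \<in> Mod (mpres m P) a"
    then obtain c d where c: "c \<in> F0 (mpres m P) a" "X = cos (mpres m P) a c"
      and d: "d \<in> F0 (mpres m P) a" "Y = cos (mpres m P) a d" using Mod_iff by metis
    have cd: "(\<lambda>i. c i + d i) \<in> F0 (mpres m P) a" using c d F0_add by blast
    show "g a (cadd (mpres m P) a X Y) = cadd (mpres m Q) a (g a X) (g a Y)"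
      using c d cd by (simp add: cadd_cos gc fapply_add)
  next
    fix a s X assume "X \<in> Mod (mpres m P) a"
    then obtain c where c: "c \<in> F0 (mpres m P) a" "X = cos (mpres m P) a c" using Mod_iff by blast
    have cs: "(\<lambda>i. s * c i) \<in> F0 (mpres m P) a" using c F0_smult by blast
    show "g a (csmult (mpres m P) a s X) = csmult (mpres m Q) a s (g a X)"
      using c cs by (simp add: csmult_cos gc fapply_smult)
  next
    fix a a' X assume aa: "a \<le> a'" and "X \<in> Mod (mpres m P) a"
    then obtain c where c: "c \<in> F0 (mpres m P) a" "X = cos (mpres m P) a c" using Mod_iff by blast
    have c2: "c \<in> F0 (mpres m P) a'" using F0_mono[OF aa c(1)] .
    show "g a' (cstr (mpres m P) a' X) = cstr (mpres m Q) a' (g a X)"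
      using c c2 aa by (simp add: cstr_cos gc)
  qed
  then show ?thesis unfolding induced_by_def using gc by auto
qed

lemma f_zero: assumes f: "pmor P Q f" shows "f a (cos P a (\<lambda>i. 0)) = cos Q a (\<lambda>i. 0)"
proof -
  let ?X = "cos P a (\<lambda>i. 0)"
  have X: "?X \<in> Mod P a" using cos_Mod F0_zero by blast
  have s: "csmult P a 0 ?X = ?X" by (simp add: csmult_cos)
  have "f a ?X \<in> Mod Q a" using f X unfolding pmor_def by blast
  then obtain y where y: "f a ?X = cos Q a y" using Mod_iff by blast
  have "f a ?X = f a (csmult P a 0 ?X)" using s by simp
  also have "\<dots> = csmult Q a 0 (f a ?X)" using f X unfolding pmor_def by blast
  also have "\<dots> = cos Q a (\<lambda>i. 0)" by (simp add: y csmult_cos)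
  finally show ?thesis .
qed

lemma lift_exists: fixes P :: "('k::field,'n::finite) pres" assumes f: "pmor P Q f" shows "\<exists>A. is_lift P Q f A"
proof -
  have "\<forall>i. \<exists>y. i < ngen P \<longrightarrow> y \<in> F0 Q (gen_gr P i) \<and>
          f (gen_gr P i) (cos P (gen_gr P i) (uv i)) = cos Q (gen_gr P i) y"
  proof
    fix i
    show "\<exists>y. i < ngen P \<longrightarrow> y \<in> F0 Q (gen_gr P i) \<and>
          f (gen_gr P i) (cos P (gen_gr P i) (uv i)) = cos Q (gen_gr P i) y"
    proof (cases "i < ngen P")
      case True
      then have "cos P (gen_gr P i) (uv i) \<in> Mod P (gen_gr P i)" using cos_Mod uv_F0 by blast
      then have "f (gen_gr P i) (cos P (gen_gr P i) (uv i)) \<in> Mod Q (gen_gr P i)"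
        using f unfolding pmor_def by blast
      then show ?thesis using Mod_iff by metis
    qed simp
  qed
  then obtain y where y: "\<And>i. i < ngen P \<Longrightarrow> y i \<in> F0 Q (gen_gr P i) \<and>
          f (gen_gr P i) (cos P (gen_gr P i) (uv i)) = cos Q (gen_gr P i) (y i)"
    by metis
  define A where "A j i = (if i < ngen P then y i j else 0)" for j i
  have vA: "valid_fmap P Q A"
    unfolding valid_fmap_def
  proof (intro allI impI)
    fix j i assume "A j i \<noteq> 0"
    then have i: "i < ngen P" and yj: "y i j \<noteq> 0" unfolding A_def by (auto split: if_splits)
    then show "j < ngen Q \<and> i < ngen P \<and> gen_gr Q j \<le> gen_gr P i"
      using y[OF i] unfolding F0_def by auto
  qed
  have main: "f a (cos P a c) = cos Q a (fapply P A c)" if c: "c \<in> F0 P a" for a c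
  proof -
    define ck where "ck k = (\<lambda>j. if j < k then c j else (0::'k))" for k
    have ckF: "ck k \<in> F0 P a" for k using c unfolding F0_def ck_def by auto
    have "f a (cos P a (ck k)) = cos Q a (fapply P A (ck k))" for k
    proof (induction k)
      case 0
      have "ck 0 = (\<lambda>j. 0)" unfolding ck_def by simp
      then show ?case using f_zero[OF f] by (simp add: fapply_zero)
    next
      case (Suc k)
      show ?case
      proof (cases "c k = 0")
        case True
        then have "ck (Suc k) = ck k" unfolding ck_def by (auto simp: fun_eq_iff less_Suc_eq)
        then show ?thesis using Suc by simp
      next
        case False
        let ?b = "gen_gr P k"
        have k: "k < ngen P" and ba: "?b \<le> a" using c False unfolding F0_def by auto
        have e1: "ck (Suc k) = (\<lambda>j. ck k j + c k * uv k j)"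
          unfolding ck_def uv_def by (auto simp: fun_eq_iff less_Suc_eq)
        let ?Z = "cstr P a (cos P ?b (uv k))"
        have U: "cos P ?b (uv k) \<in> Mod P ?b" using cos_Mod uv_F0[OF k] by blast
        have Z: "?Z = cos P a (uv k)" by (rule cstr_cos[OF ba])
        have ZM: "?Z \<in> Mod P a" unfolding Z using cos_Mod F0_mono[OF ba uv_F0[OF k]] by blast
        have SM: "csmult P a (c k) ?Z \<in> Mod P a" unfolding Z csmult_cos
          using cos_Mod F0_smult F0_mono[OF ba uv_F0[OF k]] by blast
        have CM: "cos P a (ck k) \<in> Mod P a" using cos_Mod ckF by blast
        have X1: "cos P a (ck (Suc k)) = cadd P a (cos P a (ck k)) (csmult P a (c k) ?Z)"
          by (simp add: Z csmult_cos cadd_cos e1)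
        have fZ: "f a ?Z = cos Q a (y k)"
        proof -
          have "f a ?Z = cstr Q a (f ?b (cos P ?b (uv k)))" using f U ba unfolding pmor_def by blast
          also have "\<dots> = cos Q a (y k)" using y[OF k] cstr_cos[OF ba] by simp
          finally show ?thesis .
        qed
        have "f a (cos P a (ck (Suc k))) = cadd Q a (f a (cos P a (ck k))) (f a (csmult P a (c k) ?Z))"
          using X1 f CM SM unfolding pmor_def by simp
        also have "f a (csmult P a (c k) ?Z) = csmult Q a (c k) (cos Q a (y k))"
          using f ZM fZ unfolding pmor_def by simp
        finally have "f a (cos P a (ck (Suc k))) = cos Q a (\<lambda>j. fapply P A (ck k) j + c k * y k j)"
          using Suc by (simp add: csmult_cos cadd_cos)
        moreover have "fapply P A (ck (Suc k)) = (\<lambda>j. fapply P A (ck k) j + c k * y k j)"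
          unfolding e1 fapply_add fapply_smult fapply_uv[OF k] using k by (simp add: A_def)
        ultimately show ?thesis by simp
      qed
    qed
    moreover have "ck (ngen P) = c" unfolding ck_def using F0_supp[OF c] by (auto simp: fun_eq_iff)
    ultimately show ?thesis by metis
  qed
  show ?thesis unfolding is_lift_def using vA main by blast
qed

lemma comp_cos: assumes "induced_by P' Q' A g1" "induced_by Q' R' B g2"
  and "c \<in> F0 P' a" "fapply P' A c \<in> F0 Q' a"
  shows "g2 a (g1 a (cos P' a c)) = cos R' a (fapply Q' B (fapply P' A c))"
  using assms unfolding induced_by_def by simp

lemma lift_comp_gen: assumes "is_lift P Q f A" "is_lift Q R h B" "i < ngen P"
  shows "h (gen_gr P i) (f (gen_gr P i) (cos P (gen_gr P i) (uv i))) =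
         cos R (gen_gr P i) (fapply Q B (fapply P A (uv i)))"
proof -
  have "f (gen_gr P i) (cos P (gen_gr P i) (uv i)) = cos Q (gen_gr P i) (fapply P A (uv i))"
    using assms uv_F0 unfolding is_lift_def by blast
  moreover have "fapply P A (uv i) \<in> F0 Q (gen_gr P i)"
    using assms uv_F0 fapply_F0' unfolding is_lift_def by blast
  ultimately show ?thesis using assms unfolding is_lift_def by simp
qed

lemma rep_fapply: "(\<forall>i. x i \<noteq> 0 \<longrightarrow> i < ngen P) \<Longrightarrow> fapply P A x = (\<lambda>j. \<Sum>i<ngen P. x i * fapply P A (uv i) j)"
  by (rule fapply_rep)
lemma rep_comp: "(\<forall>i. x i \<noteq> 0 \<longrightarrow> i < ngen P) \<Longrightarrow> fapply Q B (fapply P A x) = (\<lambda>j. \<Sum>i<ngen P. x i * fapply Q B (fapply P A (uv i)) j)"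
  by (rule fapply_comp_rep)
lemma rep_id: "(\<forall>i. x i \<noteq> 0 \<longrightarrow> i < ngen P) \<Longrightarrow> (\<lambda>x. x) x = (\<lambda>j. \<Sum>i<ngen P. x i * (\<lambda>x. x) (uv i) j)"
  using id_rep by auto

theorem mainTheorem6:
  fixes G :: "'n::finite \<Rightarrow> nat \<Rightarrow> real" and K :: "'n \<Rightarrow> nat" and \<delta> :: real
  assumes grid: "\<forall>i. 1 \<le> K i"
    and delta: "ereal \<delta> < ctrl_const G K / 2"
  defines "MP \<equiv> merge_pres G K \<delta>"
  shows
    "(\<forall>P::('k::field, 'n) pres. valid_pres P \<longrightarrow> valid_pres (MP P))
   \<and> (\<forall>P Q::('k, 'n) pres. valid_pres P \<longrightarrow> valid_pres Q \<longrightarrow> mod_iso P Q \<longrightarrow>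
        mod_iso (MP P) (MP Q))
   \<and> (\<forall>P Q::('k, 'n) pres. \<forall>f. valid_pres P \<longrightarrow> valid_pres Q \<longrightarrow> pmor P Q f \<longrightarrow>
        (\<exists>A. is_lift P Q f A) \<and>
        (\<forall>A. is_lift P Q f A \<longrightarrow> (\<exists>g. induced_by (MP P) (MP Q) A g)))
   \<and> (\<forall>P Q::('k, 'n) pres. \<forall>f A A' g g'. valid_pres P \<longrightarrow> valid_pres Q \<longrightarrow> pmor P Q f \<longrightarrow>
        is_lift P Q f A \<longrightarrow> is_lift P Q f A' \<longrightarrow>
        induced_by (MP P) (MP Q) A g \<longrightarrow> induced_by (MP P) (MP Q) A' g' \<longrightarrow>
        mor_eq (MP P) g g')
   \<and> (\<forall>P::('k, 'n) pres. \<forall>A g. valid_pres P \<longrightarrow> is_lift P P (\<lambda>a X. X) A \<longrightarrow>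
        induced_by (MP P) (MP P) A g \<longrightarrow> mor_eq (MP P) g (\<lambda>a X. X))
   \<and> (\<forall>P Q R::('k, 'n) pres. \<forall>f h A B C g1 g2 g3.
        valid_pres P \<longrightarrow> valid_pres Q \<longrightarrow> valid_pres R \<longrightarrow> pmor P Q f \<longrightarrow> pmor Q R h \<longrightarrow>
        is_lift P Q f A \<longrightarrow> is_lift Q R h B \<longrightarrow> is_lift P R (\<lambda>a X. h a (f a X)) C \<longrightarrow>
        induced_by (MP P) (MP Q) A g1 \<longrightarrow> induced_by (MP Q) (MP R) B g2 \<longrightarrow>
        induced_by (MP P) (MP R) C g3 \<longrightarrow>
        mor_eq (MP P) g3 (\<lambda>a X. g2 a (g1 a X)))"
proof -
  define m where "m = merge_fun G K \<delta>"
  have m: "mono m" unfolding m_def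
    by (rule merge_mono) (rule grid_sep[OF grid delta])
  have MP: "MP = mpres m" unfolding MP_def m_def by (rule merge_pres_eq)
  have C1: "\<forall>P::('k::field, 'n) pres. valid_pres P \<longrightarrow> valid_pres (MP P)"
    unfolding MP valid_pres_def using m by (auto simp: mono_def)
  have C3: "\<forall>P Q::('k, 'n) pres. \<forall>f. valid_pres P \<longrightarrow> valid_pres Q \<longrightarrow> pmor P Q f \<longrightarrow>
        (\<exists>A. is_lift P Q f A) \<and>
        (\<forall>A. is_lift P Q f A \<longrightarrow> (\<exists>g. induced_by (MP P) (MP Q) A g))"
  proof (intro allI impI conjI)
    fix P Q :: "('k, 'n) pres" and f A
    assume P: "valid_pres P" and f: "pmor P Q f"
    show "\<exists>A. is_lift P Q f A" using lift_exists[OF f] .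
    assume L: "is_lift P Q f A"
    have vA: "valid_fmap P Q A" using L unfolding is_lift_def by blast
    have cr: "\<forall>l<nrel P. fapply P A (colv P l) \<in> Rel Q (rel_gr P l)" using lift_colrel[OF P L] by blast
    show "\<exists>g. induced_by (MP P) (MP Q) A g" unfolding MP by (rule induced_exists[OF m vA cr])
  qed
  have C2: "\<forall>P Q::('k, 'n) pres. valid_pres P \<longrightarrow> valid_pres Q \<longrightarrow> mod_iso P Q \<longrightarrow>
        mod_iso (MP P) (MP Q)"
  proof (intro allI impI)
    fix P Q :: "('k, 'n) pres"
    assume P: "valid_pres P" and Q: "valid_pres Q" and "mod_iso P Q"
    then obtain f g where f: "pmor P Q f" and g: "pmor Q P g"
      and gf: "mor_eq P (\<lambda>a X. g a (f a X)) (\<lambda>a X. X)" and fg: "mor_eq Q (\<lambda>a X. f a (g a X)) (\<lambda>a X. X)"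
      unfolding mod_iso_def by blast
    obtain A where A: "is_lift P Q f A" using lift_exists[OF f] by blast
    obtain B where B: "is_lift Q P g B" using lift_exists[OF g] by blast
    obtain F where F: "induced_by (MP P) (MP Q) A F" using C3 P Q f A by blast
    obtain H where H: "induced_by (MP Q) (MP P) B H" using C3 P Q g B by blast
    have vA: "valid_fmap P Q A" and vB: "valid_fmap Q P B" using A B unfolding is_lift_def by auto
    have HF: "mor_eq (MP P) (\<lambda>a X. H a (F a X)) (\<lambda>a X. X)"
      unfolding mor_eq_def
    proof (intro allI ballI)
      fix a X assume "X \<in> Mod (MP P) a"
      then obtain c where c: "c \<in> F0 (mpres m P) a" "X = cos (mpres m P) a c" using Mod_iff MP by metis
      have Ac: "fapply P A c \<in> F0 (mpres m Q) a" by (rule fapply_F0[OF m vA c(1)])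
      have "H a (F a X) = cos (mpres m P) a (fapply Q B (fapply P A c))"
        using comp_cos[of "mpres m P" "mpres m Q" A F "mpres m P" B H c a] F H c Ac MP by simp
      also have "\<dots> = cos (mpres m P) a ((\<lambda>x. x) c)"
      proof (rule agree[OF m rep_comp rep_id _ c(1)])
        fix i assume i: "i < ngen P"
        have "cos P (gen_gr P i) (uv i) \<in> Mod P (gen_gr P i)" using cos_Mod uv_F0[OF i] by blast
        then show "cos P (gen_gr P i) (fapply Q B (fapply P A (uv i))) = cos P (gen_gr P i) ((\<lambda>x. x) (uv i))"
          using lift_comp_gen[OF A B i] gf unfolding mor_eq_def by simp
      qed auto
      finally show "H a (F a X) = X" using c by simp
    qed
    have FH: "mor_eq (MP Q) (\<lambda>a X. F a (H a X)) (\<lambda>a X. X)"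
      unfolding mor_eq_def
    proof (intro allI ballI)
      fix a X assume "X \<in> Mod (MP Q) a"
      then obtain c where c: "c \<in> F0 (mpres m Q) a" "X = cos (mpres m Q) a c" using Mod_iff MP by metis
      have Bc: "fapply Q B c \<in> F0 (mpres m P) a" by (rule fapply_F0[OF m vB c(1)])
      have "F a (H a X) = cos (mpres m Q) a (fapply P A (fapply Q B c))"
        using comp_cos[of "mpres m Q" "mpres m P" B H "mpres m Q" A F c a] F H c Bc MP by simp
      also have "\<dots> = cos (mpres m Q) a ((\<lambda>x. x) c)"
      proof (rule agree[OF m rep_comp rep_id _ c(1)])
        fix i assume i: "i < ngen Q"
        have "cos Q (gen_gr Q i) (uv i) \<in> Mod Q (gen_gr Q i)" using cos_Mod uv_F0[OF i] by blast
        then show "cos Q (gen_gr Q i) (fapply P A (fapply Q B (uv i))) = cos Q (gen_gr Q i) ((\<lambda>x. x) (uv i))"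
          using lift_comp_gen[OF B A i] fg unfolding mor_eq_def by simp
      qed auto
      finally show "F a (H a X) = X" using c by simp
    qed
    show "mod_iso (MP P) (MP Q)" unfolding mod_iso_def
      using F H HF FH unfolding induced_by_def by blast
  qed
  have C4: "\<forall>P Q::('k, 'n) pres. \<forall>f A A' g g'. valid_pres P \<longrightarrow> valid_pres Q \<longrightarrow> pmor P Q f \<longrightarrow>
        is_lift P Q f A \<longrightarrow> is_lift P Q f A' \<longrightarrow>
        induced_by (MP P) (MP Q) A g \<longrightarrow> induced_by (MP P) (MP Q) A' g' \<longrightarrow>
        mor_eq (MP P) g g'"
  proof (intro allI impI)
    fix P Q :: "('k, 'n) pres" and f A A' g g'
    assume A: "is_lift P Q f A" and A': "is_lift P Q f A'"
      and g: "induced_by (MP P) (MP Q) A g" and g': "induced_by (MP P) (MP Q) A' g'"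
    show "mor_eq (MP P) g g'" unfolding mor_eq_def
    proof (intro allI ballI)
      fix a X assume "X \<in> Mod (MP P) a"
      then obtain c where c: "c \<in> F0 (mpres m P) a" "X = cos (mpres m P) a c" using Mod_iff MP by metis
      have "g a X = cos (mpres m Q) a (fapply P A c)" using g c MP unfolding induced_by_def by simp
      also have "\<dots> = cos (mpres m Q) a (fapply P A' c)"
      proof (rule agree[OF m rep_fapply rep_fapply _ c(1)])
        fix i assume i: "i < ngen P"
        show "cos Q (gen_gr P i) (fapply P A (uv i)) = cos Q (gen_gr P i) (fapply P A' (uv i))"
          using A A' uv_F0[OF i] unfolding is_lift_def by metis
      qed auto
      also have "\<dots> = g' a X" using g' c MP unfolding induced_by_def by simp
      finally show "g a X = g' a X" .
    qed
  qed
  have C5: "\<forall>P::('k, 'n) pres. \<forall>A g. valid_pres P \<longrightarrow> is_lift P P (\<lambda>a X. X) A \<longrightarrow>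
        induced_by (MP P) (MP P) A g \<longrightarrow> mor_eq (MP P) g (\<lambda>a X. X)"
  proof (intro allI impI)
    fix P :: "('k, 'n) pres" and A g
    assume A: "is_lift P P (\<lambda>a X. X) A" and g: "induced_by (MP P) (MP P) A g"
    show "mor_eq (MP P) g (\<lambda>a X. X)" unfolding mor_eq_def
    proof (intro allI ballI)
      fix a X assume "X \<in> Mod (MP P) a"
      then obtain c where c: "c \<in> F0 (mpres m P) a" "X = cos (mpres m P) a c" using Mod_iff MP by metis
      have "g a X = cos (mpres m P) a (fapply P A c)" using g c MP unfolding induced_by_def by simp
      also have "\<dots> = cos (mpres m P) a ((\<lambda>x. x) c)"
      proof (rule agree[OF m rep_fapply rep_id _ c(1)])
        fix i assume i: "i < ngen P"
        show "cos P (gen_gr P i) (fapply P A (uv i)) = cos P (gen_gr P i) ((\<lambda>x. x) (uv i))"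
          using A uv_F0[OF i] unfolding is_lift_def by metis
      qed auto
      finally show "g a X = X" using c by simp
    qed
  qed
  have C6: "\<forall>P Q R::('k, 'n) pres. \<forall>f h A B C g1 g2 g3.
        valid_pres P \<longrightarrow> valid_pres Q \<longrightarrow> valid_pres R \<longrightarrow> pmor P Q f \<longrightarrow> pmor Q R h \<longrightarrow>
        is_lift P Q f A \<longrightarrow> is_lift Q R h B \<longrightarrow> is_lift P R (\<lambda>a X. h a (f a X)) C \<longrightarrow>
        induced_by (MP P) (MP Q) A g1 \<longrightarrow> induced_by (MP Q) (MP R) B g2 \<longrightarrow>
        induced_by (MP P) (MP R) C g3 \<longrightarrow>
        mor_eq (MP P) g3 (\<lambda>a X. g2 a (g1 a X))"
  proof (intro allI impI)
    fix P Q R :: "('k, 'n) pres" and f h A B C g1 g2 g3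
    assume A: "is_lift P Q f A" and B: "is_lift Q R h B" and C: "is_lift P R (\<lambda>a X. h a (f a X)) C"
      and g1: "induced_by (MP P) (MP Q) A g1" and g2: "induced_by (MP Q) (MP R) B g2"
      and g3: "induced_by (MP P) (MP R) C g3"
    have vA: "valid_fmap P Q A" using A unfolding is_lift_def by auto
    show "mor_eq (MP P) g3 (\<lambda>a X. g2 a (g1 a X))" unfolding mor_eq_def
    proof (intro allI ballI)
      fix a X assume "X \<in> Mod (MP P) a"
      then obtain c where c: "c \<in> F0 (mpres m P) a" "X = cos (mpres m P) a c" using Mod_iff MP by metis
      have Ac: "fapply P A c \<in> F0 (mpres m Q) a" by (rule fapply_F0[OF m vA c(1)])
      have "g3 a X = cos (mpres m R) a (fapply P C c)" using g3 c MP unfolding induced_by_def by simp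
      also have "\<dots> = cos (mpres m R) a (fapply Q B (fapply P A c))"
      proof (rule agree[OF m rep_fapply rep_comp _ c(1)])
        fix i assume i: "i < ngen P"
        show "cos R (gen_gr P i) (fapply P C (uv i)) = cos R (gen_gr P i) (fapply Q B (fapply P A (uv i)))"
          using C uv_F0[OF i] lift_comp_gen[OF A B i] unfolding is_lift_def by metis
      qed auto
      also have "\<dots> = g2 a (g1 a X)"
        using comp_cos[of "mpres m P" "mpres m Q" A g1 "mpres m R" B g2 c a] g1 g2 c Ac MP by simp
      finally show "g3 a X = g2 a (g1 a X)" .
    qed
  qed
  show ?thesis by (rule conjI[OF C1 conjI[OF C2 conjI[OF C3 conjI[OF C4 conjI[OF C5 C6]]]]])
qed

end
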